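(* Let $\lambda>0$, $p\in(0,1)$, $\theta\in(0,1)$. Let $\rho$ be a random variable taking finitely many values $q_1,\dots,q_K\in[0,M_1]$ (some constant $M_1<\infty$) with $P(\rho=q_j)=\mu_j>0$, $\sum_j\mu_j=1$. For each $n\ge1$ let $G_n$ be the Erdős–Rényi graph $G(n,p)$ on $A_n=\{0,\dots,n-1\}$ ($i\sim j$ if the edge is kept), let $\{\rho(i)\}_{i\ge0}$ be i.i.d. copies of $\rho$ independent of the graphs, and let $\{X^{(n)}_t\}_{t\ge0}$ be the SIR process on $G_n$ with states $\{0,1,-1\}^{A_n}$: state $-1$ is permanent; a vertex $i$ in state $0$ at time $t$ jumps to $1$ at rate $\frac{\lambda}{n}\sum_{j}\rho(i)\rho(j)\mathbf{1}_{\{j\sim i,X_t(j)=1\}}$; a vertex in state $1$ jumps to $-1$ at rate $1$. The initial states $X^{(n)}_0(i)$ are i.i.d. (independent of graph and weights) with $P(X^{(n)}_0(0)=1)=\theta=1-P(X^{(n)}_0(0)=0)$. For $1\le j\le K$ let $S^{(n)}_t(j)=\mathrm{card}\{i: X^{(n)}_t(i)=0,\rho(i)=q_j\}$ and $I^{(n)}_t(j)=\mathrm{card}\{i: X^{(n)}_t(i)=1,\rho(i)=q_j\}$, and for $1\le j,l\le K$ let $L^{(n)}_t(j,l)$ be the number of edges of $G_n$ joining a vertex that is susceptible (state $0$) with weight $q_j$ at time $t$ to a vertex that is infective (state $1$) with weight $q_l$ at time $t$. Then for any $1\le j,l\le K$ and $t\ge0$, $$\lim_{n\to\infty}\frac{\sup_{0\le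 u\le t}\big|L^{(n)}_u(j,l)-p\,S^{(n)}_u(j)\,I^{(n)}_u(l)\big|}{n^2}=0$$ in probability. *)

theory Defs
  imports "HOL-Probability.Probability"
begin

text \<open>An outcome is a tuple (G, w, x0, c):
  G   : edge indicators of G(n,p), G (i,j) for i < j < n (i.i.d. Bernoulli p);
  w   : vertex weights w i = rho(i), i < n (i.i.d. with law D);
  x0  : initial states x0 i, i < n (i.i.d., 1 with prob. theta, 0 otherwise);
  c   : c k = (E_k, U_k), k in nat, with E_k i.i.d. Exp(1) and U_k i.i.d. uniform on [0,1],
        all independent; they drive the standard jump-chain construction of the
        continuous-time Markov chain.\<close>

type_synonym sir_outcome =
  "(nat \<times> nat \<Rightarrow> bool) \<times> (nat \<Rightarrow> real) \<times> (nat \<Rightarrow> int) \<times> (nat \<Rightarrow> real \<times> real)"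

definition edge_meas :: "nat \<Rightarrow> real \<Rightarrow> (nat \<times> nat \<Rightarrow> bool) measure" where
  "edge_meas n p = PiM {(i, j). i < j \<and> j < n} (\<lambda>_. measure_pmf (bernoulli_pmf p))"

definition weight_meas :: "nat \<Rightarrow> real measure \<Rightarrow> (nat \<Rightarrow> real) measure" where
  "weight_meas n D = PiM {..<n} (\<lambda>_. D)"

definition init_meas :: "nat \<Rightarrow> real \<Rightarrow> (nat \<Rightarrow> int) measure" where
  "init_meas n \<theta> = PiM {..<n}
     (\<lambda>_. measure_pmf (map_pmf (\<lambda>b. if b then 1 else 0) (bernoulli_pmf \<theta>)))"

definition clock_meas :: "(nat \<Rightarrow> real \<times> real) measure" where
  "clock_meas = PiM UNIV
     (\<lambda>_. density lborel (exponential_density 1) \<Otimes>\<^sub>M uniform_measure lborel {0..1})"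

definition SIR_space :: "nat \<Rightarrow> real \<Rightarrow> real measure \<Rightarrow> real \<Rightarrow> sir_outcome measure" where
  "SIR_space n p D \<theta> =
     edge_meas n p \<Otimes>\<^sub>M (weight_meas n D \<Otimes>\<^sub>M (init_meas n \<theta> \<Otimes>\<^sub>M clock_meas))"

definition adj :: "(nat \<times> nat \<Rightarrow> bool) \<Rightarrow> nat \<Rightarrow> nat \<Rightarrow> bool" where
  "adj G i j \<longleftrightarrow> i \<noteq> j \<and> G (min i j, max i j)"

definition sir_rate ::
  "real \<Rightarrow> nat \<Rightarrow> (nat \<times> nat \<Rightarrow> bool) \<Rightarrow> (nat \<Rightarrow> real) \<Rightarrow> (nat \<Rightarrow> int) \<Rightarrow> nat \<Rightarrow> real" where
  "sir_rate lam n G w x i =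
     (if x i = 0 then lam / real n * (\<Sum>j<n. if adj G j i \<and> x j = 1 then w i * w j else 0)
      else if x i = 1 then 1 else 0)"

definition sir_total ::
  "real \<Rightarrow> nat \<Rightarrow> (nat \<times> nat \<Rightarrow> bool) \<Rightarrow> (nat \<Rightarrow> real) \<Rightarrow> (nat \<Rightarrow> int) \<Rightarrow> real" where
  "sir_total lam n G w x = (\<Sum>i<n. sir_rate lam n G w x i)"

text \<open>Vertex selected by a uniform variable U, proportionally to the rates.\<close>
definition sir_choose ::
  "real \<Rightarrow> nat \<Rightarrow> (nat \<times> nat \<Rightarrow> bool) \<Rightarrow> (nat \<Rightarrow> real) \<Rightarrow> (nat \<Rightarrow> int) \<Rightarrow> real \<Rightarrow> nat" where
  "sir_choose lam n G w x U =
     (LEAST i. i < n \<and> U * sir_total lam n G w x < (\<Sum>k\<le>i. sir_rate lam n G w x k))"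

definition sir_flip :: "(nat \<Rightarrow> int) \<Rightarrow> nat \<Rightarrow> (nat \<Rightarrow> int)" where
  "sir_flip x i = x(i := (if x i = 0 then 1 else if x i = 1 then -1 else x i))"

fun sir_chain :: "real \<Rightarrow> nat \<Rightarrow> sir_outcome \<Rightarrow> nat \<Rightarrow> (nat \<Rightarrow> int)" where
  "sir_chain lam n (G, w, x0, c) 0 = x0"
| "sir_chain lam n (G, w, x0, c) (Suc k) =
     (let x = sir_chain lam n (G, w, x0, c) k in
      if sir_total lam n G w x > 0 then sir_flip x (sir_choose lam n G w x (snd (c k))) else x)"

fun sir_jump_time :: "real \<Rightarrow> nat \<Rightarrow> sir_outcome \<Rightarrow> nat \<Rightarrow> real" where
  "sir_jump_time lam n (G, w, x0, c) 0 = 0"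
| "sir_jump_time lam n (G, w, x0, c) (Suc k) =
     sir_jump_time lam n (G, w, x0, c) k
       + fst (c k) / sir_total lam n G w (sir_chain lam n (G, w, x0, c) k)"

definition sir_alive :: "real \<Rightarrow> nat \<Rightarrow> sir_outcome \<Rightarrow> nat \<Rightarrow> bool" where
  "sir_alive lam n \<omega> k \<longleftrightarrow>
     (\<forall>m<k. case \<omega> of (G, w, x0, c) \<Rightarrow> sir_total lam n G w (sir_chain lam n \<omega> m) > 0)"

definition sir_X :: "real \<Rightarrow> nat \<Rightarrow> sir_outcome \<Rightarrow> real \<Rightarrow> (nat \<Rightarrow> int)" where
  "sir_X lam n \<omega> t =
     sir_chain lam n \<omega> (Max {k. sir_alive lam n \<omega> k \<and> sir_jump_time lam n \<omega> k \<le> t})"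

definition sir_S :: "real \<Rightarrow> nat \<Rightarrow> sir_outcome \<Rightarrow> real \<Rightarrow> real \<Rightarrow> nat" where
  "sir_S lam n \<omega> t qj =
     card {i. i < n \<and> sir_X lam n \<omega> t i = 0 \<and> fst (snd \<omega>) i = qj}"

definition sir_I :: "real \<Rightarrow> nat \<Rightarrow> sir_outcome \<Rightarrow> real \<Rightarrow> real \<Rightarrow> nat" where
  "sir_I lam n \<omega> t ql =
     card {i. i < n \<and> sir_X lam n \<omega> t i = 1 \<and> fst (snd \<omega>) i = ql}"

definition sir_L :: "real \<Rightarrow> nat \<Rightarrow> sir_outcome \<Rightarrow> real \<Rightarrow> real \<Rightarrow> real \<Rightarrow> nat" where
  "sir_L lam n \<omega> t qj ql =
     card {(i, i'). i < n \<and> i' < n \<and> adj (fst \<omega>) i i'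
        \<and> sir_X lam n \<omega> t i = 0 \<and> fst (snd \<omega>) i = qj
        \<and> sir_X lam n \<omega> t i' = 1 \<and> fst (snd \<omega>) i' = ql}"

definition sir_dev :: "real \<Rightarrow> real \<Rightarrow> nat \<Rightarrow> real \<Rightarrow> real \<Rightarrow> real \<Rightarrow> sir_outcome \<Rightarrow> real" where
  "sir_dev lam p n qj ql t \<omega> =
     Sup ((\<lambda>u. \<bar>real (sir_L lam n \<omega> u qj ql)
               - p * real (sir_S lam n \<omega> u qj) * real (sir_I lam n \<omega> u ql)\<bar>) ` {0..t})
     / (real n)^2"

end

theory Submission
  imports Defs "HOL-Real_Asymp.Real_Asymp"
begin

definition eT :: "nat set \<Rightarrow> nat set \<Rightarrow> (nat \<times> nat) set" where
  "eT S I = (\<lambda>(i,i'). (min i i', max i i')) ` (S \<times> I)"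

lemma inj_eT: "S \<inter> I = {} \<Longrightarrow> inj_on (\<lambda>(i,i'). (min i i', max i i')) (S \<times> I)"
  unfolding inj_on_def
  by (auto simp: min_def max_def split: if_splits)

lemma card_eT: "S \<inter> I = {} \<Longrightarrow> finite S \<Longrightarrow> finite I \<Longrightarrow> card (eT S I) = card S * card I"
  unfolding eT_def by (simp add: card_image inj_eT card_cartesian_product)

lemma eT_sub: "S \<subseteq> {..<n} \<Longrightarrow> I \<subseteq> {..<n} \<Longrightarrow> S \<inter> I = {} \<Longrightarrow>
   eT S I \<subseteq> {(i, j). i < j \<and> j < n}"
proof
  fix k assume "S \<subseteq> {..<n}" "I \<subseteq> {..<n}" "S \<inter> I = {}" "k \<in> eT S I"
  then obtain a b where "a \<in> S" "b \<in> I" "k = (min a b, max a b)" unfolding eT_def by auto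
  moreover have "a \<noteq> b" using \<open>S \<inter> I = {}\<close> calculation by auto
  ultimately show "k \<in> {(i, j). i < j \<and> j < n}" using \<open>S \<subseteq> {..<n}\<close> \<open>I \<subseteq> {..<n}\<close>
    by (auto simp: min_def max_def)
qed

lemma card_edges:
  assumes "S \<inter> I = {}" "finite S" "finite I"
  shows "real (card {(i,i'). i \<in> S \<and> i' \<in> I \<and> adj G i i'}) =
         (\<Sum>k\<in>eT S I. if G k then 1 else 0)"
proof -
  let ?f = "\<lambda>(i::nat,i'::nat). (min i i', max i i')"
  have 1: "{(i,i'). i \<in> S \<and> i' \<in> I \<and> adj G i i'} = {x \<in> S \<times> I. G (?f x)}"
  proof (intro set_eqI iffI)
    fix x assume "x \<in> {(i,i'). i \<in> S \<and> i' \<in> I \<and> adj G i i'}"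
    then show "x \<in> {x \<in> S \<times> I. G (?f x)}" by (cases x) (simp add: adj_def)
  next
    fix x assume "x \<in> {x \<in> S \<times> I. G (?f x)}"
    then show "x \<in> {(i,i'). i \<in> S \<and> i' \<in> I \<and> adj G i i'}"
      using assms(1) by (cases x) (auto simp: adj_def)
  qed
  have 2: "?f ` {x \<in> S \<times> I. G (?f x)} = {k \<in> eT S I. G k}"
    unfolding eT_def by auto
  have "card {x \<in> S \<times> I. G (?f x)} = card {k \<in> eT S I. G k}"
  proof -
    have "inj_on ?f {x \<in> S \<times> I. G (?f x)}"
      by (rule inj_on_subset[OF inj_eT[OF assms(1)]]) blast
    then have "card (?f ` {x \<in> S \<times> I. G (?f x)}) = card {x \<in> S \<times> I. G (?f x)}"
      by (rule card_image)
    then show ?thesis using 2 by simp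
  qed
  moreover have "real (card {k \<in> eT S I. G k}) = (\<Sum>k\<in>eT S I. if G k then 1 else 0)"
  proof -
    have fin: "finite (eT S I)" using assms unfolding eT_def by simp
    have "(\<Sum>k\<in>eT S I. if G k then 1 else 0) = real (card (eT S I \<inter> {k. G k}))"
      using fin by (simp add: sum.If_cases)
    moreover have "{k \<in> eT S I. G k} = eT S I \<inter> {k. G k}" by blast
    ultimately show ?thesis by simp
  qed
  ultimately show ?thesis using 1 by simp
qed

lemma edge_prob: "prob_space (edge_meas n p)"
  unfolding edge_meas_def by (intro prob_space_PiM prob_space_measure_pmf)

lemma edge_hoeffding:
  fixes T :: "(nat \<times> nat) set" and r :: real
  assumes p: "0 \<le> p" "p \<le> 1" and T: "T \<subseteq> {(i, j). i < j \<and> j < n}" "T \<noteq> {}" "finite T" and r: "r \<ge> 0"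
  shows "measure (edge_meas n p) {G \<in> space (edge_meas n p).
           \<bar>(\<Sum>k\<in>T. if G k then 1 else 0) - real (card T) * p\<bar> \<ge> r}
         \<le> 2 * exp (-2 * r^2 / real (card T))"
proof -
  define E where "E = {(i, j). i < j \<and> j < n}"
  define Mb where "Mb = measure_pmf (bernoulli_pmf p)"
  have EMeq: "edge_meas n p = PiM E (\<lambda>_. Mb)" unfolding edge_meas_def E_def Mb_def ..
  interpret EM: prob_space "edge_meas n p" by (rule edge_prob)
  interpret PP: product_prob_space "\<lambda>_. Mb" E
    unfolding Mb_def by (intro product_prob_spaceI prob_space_measure_pmf)
  have TE: "T \<subseteq> E" using T unfolding E_def by simp
  have rvc: "(\<lambda>G. G k) \<in> measurable (edge_meas n p) Mb" if "k \<in> E" for k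
  proof -
    have "(\<lambda>G. G k) \<in> measurable (PiM E (\<lambda>_. Mb)) Mb"
      using that by (rule measurable_component_singleton)
    then show ?thesis by (simp add: EMeq)
  qed
  have ind0: "EM.indep_vars (\<lambda>_. Mb) (\<lambda>k G. G k) T"
  proof (subst EM.indep_vars_iff_distr_eq_PiM')
    show "T \<noteq> {}" by fact
    show "\<And>i. i \<in> T \<Longrightarrow> (\<lambda>G. G i) \<in> measurable (edge_meas n p) Mb" using rvc TE by auto
    have "distr (edge_meas n p) (PiM T (\<lambda>_. Mb)) (\<lambda>x. \<lambda>i\<in>T. x i) = PiM T (\<lambda>_. Mb)"
      unfolding EMeq using PP.distr_PiM_restrict_finite[OF T(3) TE] by (simp add: restrict_def)
    also have "\<dots> = PiM T (\<lambda>i. distr (edge_meas n p) Mb (\<lambda>G. G i))"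
    proof (rule PiM_cong)
      fix i assume "i \<in> T"
      then show "Mb = distr (edge_meas n p) Mb (\<lambda>G. G i)"
        unfolding EMeq using TE
        by (subst distr_PiM_component) (auto simp: Mb_def prob_space_measure_pmf)
    qed simp
    finally show "distr (edge_meas n p) (PiM T (\<lambda>_. Mb)) (\<lambda>x. \<lambda>i\<in>T. x i) =
       PiM T (\<lambda>i. distr (edge_meas n p) Mb (\<lambda>G. G i))" .
  qed
  define X :: "nat \<times> nat \<Rightarrow> (nat \<times> nat \<Rightarrow> bool) \<Rightarrow> real" where "X = (\<lambda>k G. if G k then 1 else 0)"
  have ind: "EM.indep_vars (\<lambda>_. borel) X T"
    unfolding X_def
    by (rule EM.indep_vars_compose2[OF ind0, where Y = "\<lambda>_ b. if b then 1 else (0::real)"])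
       (simp add: Mb_def)
  have expX: "EM.expectation (X k) = p" if "k \<in> T" for k
  proof -
    have "EM.expectation (X k) = integral\<^sup>L (distr (edge_meas n p) Mb (\<lambda>G. G k)) (\<lambda>b. if b then 1 else (0::real))"
      unfolding X_def using rvc[of k] that TE by (subst integral_distr) (auto simp: Mb_def)
    also have "\<dots> = integral\<^sup>L Mb (\<lambda>b. if b then 1 else (0::real))"
      unfolding EMeq using that TE
      by (subst distr_PiM_component) (auto simp: Mb_def prob_space_measure_pmf)
    also have "\<dots> = p" unfolding Mb_def using p by simp
    finally show ?thesis .
  qed
  interpret H: Hoeffding_ineq "edge_meas n p" T X "\<lambda>_. 0" "\<lambda>_. 1" "\<Sum>i\<in>T. EM.expectation (X i)"
  proof unfold_locales
    show "finite T" by fact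
    show "EM.indep_vars (\<lambda>_. borel) X T" by fact
    show "\<And>i. i \<in> T \<Longrightarrow> AE x in edge_meas n p. X i x \<in> {0..1}" unfolding X_def by simp
  qed simp
  have mu: "(\<Sum>i\<in>T. EM.expectation (X i)) = real (card T) * p" using expX by simp
  have pos: "(\<Sum>i\<in>T. ((1::real) - 0)\<^sup>2) > 0" using T by (simp add: card_gt_0_iff)
  have "(\<Sum>i\<in>T. ((1::real) - 0)\<^sup>2) = real (card T)" by simp
  then show ?thesis using H.Hoeffding_ineq_abs_ge[OF r pos, unfolded mu] by (simp add: X_def)
qed

definition pairs :: "nat \<Rightarrow> (nat set \<times> nat set) set" where
  "pairs n = {(S, I). S \<subseteq> {..<n} \<and> I \<subseteq> {..<n} \<and> S \<inter> I = {}}"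

definition BSI :: "nat \<Rightarrow> real \<Rightarrow> real \<Rightarrow> nat set \<Rightarrow> nat set \<Rightarrow> (nat \<times> nat \<Rightarrow> bool) set" where
  "BSI n p \<epsilon> S I = {G \<in> space (edge_meas n p).
     \<bar>(\<Sum>k\<in>eT S I. if G k then 1 else 0) - real (card (eT S I)) * p\<bar> \<ge> \<epsilon> * real n ^ 2}"

definition Bad :: "nat \<Rightarrow> real \<Rightarrow> real \<Rightarrow> (nat \<times> nat \<Rightarrow> bool) set" where
  "Bad n p \<epsilon> = (\<Union>x\<in>pairs n. BSI n p \<epsilon> (fst x) (snd x))"

lemma finite_pairs: "finite (pairs n)" and card_pairs: "card (pairs n) \<le> 4 ^ n"
proof -
  have sub: "pairs n \<subseteq> Pow {..<n} \<times> Pow {..<n}" unfolding pairs_def by auto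
  show "finite (pairs n)" by (rule finite_subset[OF sub]) simp
  have "card (pairs n) \<le> card (Pow {..<n} \<times> Pow {..<n})"
    by (rule card_mono[OF _ sub]) simp
  also have "\<dots> = 4 ^ n" by (simp add: card_cartesian_product card_Pow power_mult_distrib[symmetric])
  finally show "card (pairs n) \<le> 4 ^ n" .
qed

lemma BSI_sets: "BSI n p \<epsilon> S I \<in> sets (edge_meas n p)" if "S \<subseteq> {..<n}" "I \<subseteq> {..<n}" "S \<inter> I = {}"
proof -
  have TE: "eT S I \<subseteq> {(i, j). i < j \<and> j < n}" by (rule eT_sub[OF that])
  have [measurable]: "(\<lambda>G. \<Sum>k\<in>eT S I. if G k then 1 else (0::real)) \<in> borel_measurable (edge_meas n p)"
  proof (intro borel_measurable_sum)
    fix k assume "k \<in> eT S I"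
    then have "(\<lambda>G. G k) \<in> measurable (edge_meas n p) (measure_pmf (bernoulli_pmf p))"
      using TE unfolding edge_meas_def by (intro measurable_component_singleton) auto
    then show "(\<lambda>G. if G k then 1 else (0::real)) \<in> borel_measurable (edge_meas n p)"
      by (rule measurable_compose) simp
  qed
  show ?thesis unfolding BSI_def by measurable
qed

lemma Bad_sets: "Bad n p \<epsilon> \<in> sets (edge_meas n p)"
  unfolding Bad_def using finite_pairs
  by (intro sets.finite_UN) (auto simp: pairs_def intro!: BSI_sets)

lemma BSI_measure:
  assumes p: "0 \<le> p" "p \<le> 1" and e: "\<epsilon> > 0" and n: "n > 0" and x: "(S, I) \<in> pairs n"
  shows "measure (edge_meas n p) (BSI n p \<epsilon> S I) \<le> 2 * exp (-2 * \<epsilon>^2 * real n ^ 2)"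
proof -
  have SI: "S \<subseteq> {..<n}" "I \<subseteq> {..<n}" "S \<inter> I = {}" using x unfolding pairs_def by auto
  have fin: "finite S" "finite I" using SI(1,2) finite_subset by blast+
  have finT: "finite (eT S I)" using fin unfolding eT_def by simp
  show ?thesis
  proof (cases "eT S I = {}")
    case True
    have "\<epsilon> * real n ^ 2 > 0" using e n by simp
    then have "BSI n p \<epsilon> S I = {}" unfolding BSI_def True by auto
    then show ?thesis by simp
  next
    case False
    have cT: "real (card (eT S I)) \<le> real n ^ 2"
    proof -
      have "card S \<le> n" "card I \<le> n" using SI by (auto dest: card_mono[rotated])
      then have "card S * card I \<le> n * n" by (rule mult_le_mono)
      then show ?thesis using card_eT[OF SI(3) fin] by (simp add: power2_eq_square flip: of_nat_mult)
    qed
    have cpos: "real (card (eT S I)) > 0" using False finT by (simp add: card_gt_0_iff)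
    have "measure (edge_meas n p) (BSI n p \<epsilon> S I) \<le> 2 * exp (-2 * (\<epsilon> * real n ^ 2)^2 / real (card (eT S I)))"
      unfolding BSI_def
      by (rule edge_hoeffding[OF p eT_sub[OF SI] False finT]) (use e in simp)
    also have "\<dots> \<le> 2 * exp (-2 * \<epsilon>^2 * real n ^ 2)"
    proof -
      have "2 * \<epsilon>^2 * real n ^ 2 * real (card (eT S I)) \<le> 2 * \<epsilon>^2 * real n ^ 2 * real n ^ 2"
        using cT by (intro mult_left_mono) auto
      then have "2 * \<epsilon>^2 * real n ^ 2 \<le> 2 * (\<epsilon> * real n ^ 2)^2 / real (card (eT S I))"
        using cpos by (simp add: field_simps power2_eq_square)
      then show ?thesis by simp
    qed
    finally show ?thesis .
  qed
qed

lemma Bad_measure: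
  assumes p: "0 \<le> p" "p \<le> 1" and e: "\<epsilon> > 0" and n: "n > 0"
  shows "measure (edge_meas n p) (Bad n p \<epsilon>) \<le> 4 ^ n * (2 * exp (-2 * \<epsilon>^2 * real n ^ 2))"
proof -
  interpret EM: prob_space "edge_meas n p" by (rule edge_prob)
  have "measure (edge_meas n p) (Bad n p \<epsilon>) \<le> (\<Sum>x\<in>pairs n. measure (edge_meas n p) (BSI n p \<epsilon> (fst x) (snd x)))"
    unfolding Bad_def using finite_pairs
    by (intro measure_subadditive_finite) (auto simp: pairs_def intro!: BSI_sets)
  also have "\<dots> \<le> (\<Sum>x\<in>pairs n. 2 * exp (-2 * \<epsilon>^2 * real n ^ 2))"
    by (intro sum_mono) (use BSI_measure[OF p e n] in force)
  also have "\<dots> = real (card (pairs n)) * (2 * exp (-2 * \<epsilon>^2 * real n ^ 2))" by simp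
  also have "\<dots> \<le> 4 ^ n * (2 * exp (-2 * \<epsilon>^2 * real n ^ 2))"
  proof (rule mult_right_mono)
    show "real (card (pairs n)) \<le> 4 ^ n" using card_pairs[of n]
      by (metis of_nat_le_iff of_nat_numeral of_nat_power)
  qed simp
  finally show ?thesis .
qed

lemma bound_lim:
  fixes \<epsilon> :: real assumes e: "\<epsilon> > 0"
  shows "(\<lambda>n::nat. 4 ^ n * (2 * exp (-2 * \<epsilon>^2 * real n ^ 2))) \<longlonglongrightarrow> 0"
  using e by real_asymp

lemma dev_good:
  assumes G: "fst \<omega> \<in> space (edge_meas n p)" "fst \<omega> \<notin> Bad n p \<epsilon>" and n: "n > 0" and t: "t \<ge> 0"
  shows "sir_dev lam p n qj ql t \<omega> \<le> \<epsilon>"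
proof -
  let ?f = "\<lambda>u. \<bar>real (sir_L lam n \<omega> u qj ql)
               - p * real (sir_S lam n \<omega> u qj) * real (sir_I lam n \<omega> u ql)\<bar>"
  have each: "?f u < \<epsilon> * real n ^ 2" for u
  proof -
    define X where "X = sir_X lam n \<omega> u"
    define w where "w = fst (snd \<omega>)"
    define S where "S = {i. i < n \<and> X i = 0 \<and> w i = qj}"
    define I where "I = {i. i < n \<and> X i = 1 \<and> w i = ql}"
    have SI: "S \<subseteq> {..<n}" "I \<subseteq> {..<n}" "S \<inter> I = {}" unfolding S_def I_def by auto
    have fin: "finite S" "finite I" using SI(1,2) finite_subset by blast+
    have pr: "(S, I) \<in> pairs n" using SI unfolding pairs_def by simp
    have "fst \<omega> \<notin> BSI n p \<epsilon> S I" using G(2) pr unfolding Bad_def by force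
    then have lt: "\<bar>(\<Sum>k\<in>eT S I. if fst \<omega> k then 1 else 0) - real (card (eT S I)) * p\<bar> < \<epsilon> * real n ^ 2"
      using G(1) unfolding BSI_def by auto
    have L: "sir_L lam n \<omega> u qj ql = card {(i,i'). i \<in> S \<and> i' \<in> I \<and> adj (fst \<omega>) i i'}"
      unfolding sir_L_def S_def I_def X_def w_def by (rule arg_cong[where f=card]) auto
    have SS: "sir_S lam n \<omega> u qj = card S" unfolding sir_S_def S_def X_def w_def ..
    have II: "sir_I lam n \<omega> u ql = card I" unfolding sir_I_def I_def X_def w_def ..
    show ?thesis
      using lt unfolding L SS II card_edges[OF SI(3) fin, of "fst \<omega>"] card_eT[OF SI(3) fin]
      by (simp add: algebra_simps)
  qed
  have "Sup (?f ` {0..t}) \<le> \<epsilon> * real n ^ 2"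
    by (rule cSup_least) (use t each in \<open>auto intro: less_imp_le\<close>)
  then show ?thesis unfolding sir_dev_def using n by (simp add: divide_le_eq)
qed

lemma rest_prob: "prob_space D \<Longrightarrow> prob_space (weight_meas n D \<Otimes>\<^sub>M (init_meas n \<theta> \<Otimes>\<^sub>M clock_meas))"
  unfolding weight_meas_def init_meas_def clock_meas_def
  by (intro prob_space_pair prob_space_PiM prob_space_measure_pmf prob_space_exponential_density
      prob_space_uniform_measure) auto

theorem corollary3p3:
  fixes lam p \<theta> M1 t :: real and K j l :: nat and q \<mu> :: "nat \<Rightarrow> real" and D :: "real measure"
  assumes "lam > 0" and "0 < p" and "p < 1" and "0 < \<theta>" and "\<theta> < 1"
    and "\<forall>i<K. 0 \<le> q i \<and> q i \<le> M1" and "inj_on q {..<K}"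
    and "\<forall>i<K. \<mu> i > 0" and "(\<Sum>i<K. \<mu> i) = 1"
    and "prob_space D" and "sets D = sets borel" and "\<forall>i<K. measure D {q i} = \<mu> i"
    and "j < K" and "l < K" and "t \<ge> 0"
  shows "\<forall>\<epsilon>>0. \<forall>\<delta>>0. \<exists>N. \<forall>n\<ge>N. \<exists>A \<in> sets (SIR_space n p D \<theta>).
           {\<omega> \<in> space (SIR_space n p D \<theta>). sir_dev lam p n (q j) (q l) t \<omega> > \<epsilon>} \<subseteq> A
           \<and> measure (SIR_space n p D \<theta>) A < \<delta>"
proof (intro allI impI)
  fix \<epsilon> \<delta> :: real assume e: "\<epsilon> > 0" and d: "\<delta> > 0"
  from bound_lim[OF e] d obtain N0 where N0: "\<forall>n\<ge>N0. dist (4 ^ n * (2 * exp (-2 * \<epsilon>^2 * real n ^ 2))) 0 < \<delta>"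
    unfolding lim_sequentially by blast
  show "\<exists>N. \<forall>n\<ge>N. \<exists>A \<in> sets (SIR_space n p D \<theta>).
           {\<omega> \<in> space (SIR_space n p D \<theta>). sir_dev lam p n (q j) (q l) t \<omega> > \<epsilon>} \<subseteq> A
           \<and> measure (SIR_space n p D \<theta>) A < \<delta>"
  proof (intro exI allI impI)
    fix n assume nN: "Suc N0 \<le> n"
    then have n: "n > 0" by simp
    define R where "R = weight_meas n D \<Otimes>\<^sub>M (init_meas n \<theta> \<Otimes>\<^sub>M clock_meas)"
    have SIR: "SIR_space n p D \<theta> = edge_meas n p \<Otimes>\<^sub>M R" unfolding SIR_space_def R_def ..
    interpret R: prob_space R unfolding R_def by (rule rest_prob) fact
    interpret EM: prob_space "edge_meas n p" by (rule edge_prob)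
    define A where "A = Bad n p \<epsilon> \<times> space R"
    have Asets: "A \<in> sets (SIR_space n p D \<theta>)"
      unfolding A_def SIR using Bad_sets by (intro pair_measureI) auto
    have "emeasure (SIR_space n p D \<theta>) A = emeasure (edge_meas n p) (Bad n p \<epsilon>) * emeasure R (space R)"
      unfolding A_def SIR by (rule R.emeasure_pair_measure_Times[OF Bad_sets sets.top])
    then have "measure (SIR_space n p D \<theta>) A = measure (edge_meas n p) (Bad n p \<epsilon>)"
      by (simp add: measure_def R.emeasure_space_1)
    also have "\<dots> \<le> 4 ^ n * (2 * exp (-2 * \<epsilon>^2 * real n ^ 2))"
      using Bad_measure[of p \<epsilon> n] assms(2,3) e n by simp
    also have "\<dots> < \<delta>" using N0 nN by simp
    finally have mA: "measure (SIR_space n p D \<theta>) A < \<delta>" .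
    have sub: "{\<omega> \<in> space (SIR_space n p D \<theta>). sir_dev lam p n (q j) (q l) t \<omega> > \<epsilon>} \<subseteq> A"
    proof
      fix \<omega> assume w: "\<omega> \<in> {\<omega> \<in> space (SIR_space n p D \<theta>). sir_dev lam p n (q j) (q l) t \<omega> > \<epsilon>}"
      then have sp: "fst \<omega> \<in> space (edge_meas n p)" "snd \<omega> \<in> space R"
        unfolding SIR by (auto simp: space_pair_measure)
      have "fst \<omega> \<in> Bad n p \<epsilon>"
      proof (rule ccontr)
        assume "fst \<omega> \<notin> Bad n p \<epsilon>"
        then have "sir_dev lam p n (q j) (q l) t \<omega> \<le> \<epsilon>" by (rule dev_good[OF sp(1) _ n assms(15)])
        with w show False by simp
      qed
      then show "\<omega> \<in> A" using sp unfolding A_def by (cases \<omega>) auto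
    qed
    show "\<exists>A \<in> sets (SIR_space n p D \<theta>).
           {\<omega> \<in> space (SIR_space n p D \<theta>). sir_dev lam p n (q j) (q l) t \<omega> > \<epsilon>} \<subseteq> A
           \<and> measure (SIR_space n p D \<theta>) A < \<delta>"
      using Asets sub mA by blast
  qed
qed

end
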